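(* Let $n\in\mathbb{N}$ and consider input sequences $X\in\mathbb{R}^{n\times d_{\text{emb}}}$ with entries bounded in absolute value by $M$. Let $\operatorname{SaturatedAttn}(X;\Gamma_s)$ be a causally masked saturated attention head with parameter norm bounded by $O(1)$, producing outputs $o_1,\dots,o_n\in\mathbb{R}^{d_h}$. Suppose that for each row $i$, if $j\in\mathcal{M}_i$ and $k\le i$, $k\notin\mathcal{M}_i$, then $\mathbf{A}_{ij}-\mathbf{A}_{ik}\ge\delta$ for some $\delta>0$. Then for any $\varepsilon>0$ there exists a standard single-head causal softmax attention function $\operatorname{Attn}(X;\Gamma)$ with parameter norms bounded by $\operatorname{poly}(M,1/\delta,\log n,\log(1/\varepsilon))$ whose outputs $\tilde o_1,\dots,\tilde o_n$ satisfy $\|\tilde o_i - o_i\|_\infty\le\varepsilon$ for all $1\le i\le n$.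
   Context: Saturated masked attention with weights $\Gamma_s=(W_Q,W_K,W_V)$: $\mathbf{A} = XW_Q(XW_K)^\top$, $\mathcal{M}_i = \{j\le i\mid \mathbf{A}_{ij}=\max_{k\le i}\mathbf{A}_{ik}\}$, output $\operatorname{SaturatedAttn}(X;\Gamma_s)_i = \frac{1}{|\mathcal{M}_i|}\sum_{j\in\mathcal{M}_i}X_jW_V$. A causal softmax attention head with parameters $(W_Q',W_K',W_V')$ outputs at row $i$ the vector $\sum_{j\le i}\alpha_{ij}X_jW_V'$ with $\alpha_{ij} = \exp(q_i\cdot k_j)/\sum_{k\le i}\exp(q_i\cdot k_k)$, $q_i = X_iW_Q'$, $k_j = X_jW_K'$. *)

theory Defs
  imports "HOL-Analysis.Analysis"
begin

text \<open>Input sequences: rows X 1, ..., X n, each a row vector in R^{d_emb} (index type 'e).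
 Weight matrices W :: real^'k^'e are d_emb x d_k matrices; X_i W is  X i v* W.\<close>

definition attn_score ::
  "(nat \<Rightarrow> real^'e) \<Rightarrow> real^'k^'e \<Rightarrow> real^'k^'e \<Rightarrow> nat \<Rightarrow> nat \<Rightarrow> real" where
  "attn_score X WQ WK i j = (X i v* WQ) \<bullet> (X j v* WK)"

definition max_set ::
  "(nat \<Rightarrow> real^'e) \<Rightarrow> real^'k^'e \<Rightarrow> real^'k^'e \<Rightarrow> nat \<Rightarrow> nat set" where
  "max_set X WQ WK i =
     {j \<in> {1..i}. attn_score X WQ WK i j = Max ((\<lambda>k. attn_score X WQ WK i k) ` {1..i})}"

definition saturated_attn ::
  "(nat \<Rightarrow> real^'e) \<Rightarrow> real^'k^'e \<Rightarrow> real^'k^'e \<Rightarrow> real^'h^'e \<Rightarrow> nat \<Rightarrow> real^'h" where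
  "saturated_attn X WQ WK WV i =
     (1 / real (card (max_set X WQ WK i))) *\<^sub>R (\<Sum>j\<in>max_set X WQ WK i. X j v* WV)"

definition softmax_attn ::
  "(nat \<Rightarrow> real^'e) \<Rightarrow> real^'k^'e \<Rightarrow> real^'k^'e \<Rightarrow> real^'h^'e \<Rightarrow> nat \<Rightarrow> real^'h" where
  "softmax_attn X WQ WK WV i =
     (\<Sum>j\<in>{1..i}. (exp (attn_score X WQ WK i j) /
                     (\<Sum>k\<in>{1..i}. exp (attn_score X WQ WK i k))) *\<^sub>R (X j v* WV))"

definition linf_norm :: "real^'h \<Rightarrow> real" where
  "linf_norm v = Max (range (\<lambda>h. \<bar>v $ h\<bar>))"

end

theory Submission
  imports Defs
begin

lemma sm_bound:
  fixes I S :: "nat set" and a v :: "nat \<Rightarrow> real"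
  assumes fin: "finite I" and SI: "S \<subseteq> I" and Sne: "S \<noteq> {}"
    and aS: "\<forall>j\<in>S. a j = m" and aR: "\<forall>k\<in>I-S. a k \<le> m - \<delta>"
    and vK: "\<forall>j\<in>I. \<bar>v j\<bar> \<le> K" and c0: "c \<ge> 0"
  shows "\<bar>(\<Sum>j\<in>I. (exp (c*a j) / (\<Sum>k\<in>I. exp (c*a k))) * v j) - (1/real(card S)) * (\<Sum>j\<in>S. v j)\<bar>
     \<le> 2*K*real(card I)*exp(-(c*\<delta>))"
proof -
  define R where "R = I - S"
  define e where "e = exp (c*m)"
  define ns where "ns = real (card S)"
  define r where "r = (\<Sum>k\<in>R. exp (c*a k))"
  define q where "q = (\<Sum>k\<in>R. exp (c*a k) * v k)"
  define u where "u = (\<Sum>j\<in>S. v j)"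
  have finS: "finite S" using fin SI finite_subset by blast
  have finR: "finite R" using fin R_def by simp
  have s0: "ns > 0" using finS Sne ns_def by (simp add: card_gt_0_iff)
  have e0: "e > 0" using e_def by simp
  have r0: "r \<ge> 0" unfolding r_def by (simp add: sum_nonneg)
  obtain j0 where "j0 \<in> S" using Sne by blast
  hence K0: "K \<ge> 0" using vK SI by (meson abs_ge_zero order_trans subsetD)
  have Z: "(\<Sum>k\<in>I. exp (c*a k)) = ns*e + r"
  proof -
    have "(\<Sum>k\<in>I. exp (c*a k)) = (\<Sum>k\<in>S. exp (c*a k)) + r"
      unfolding r_def R_def using sum.subset_diff[OF SI fin] by (simp add: add.commute)
    also have "(\<Sum>k\<in>S. exp (c*a k)) = ns*e" unfolding ns_def e_def using aS by simp
    finally show ?thesis .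
  qed
  have N: "(\<Sum>j\<in>I. exp (c*a j) * v j) = e*u + q"
  proof -
    have "(\<Sum>j\<in>I. exp (c*a j) * v j) = (\<Sum>k\<in>S. exp (c*a k) * v k) + q"
      unfolding q_def R_def using sum.subset_diff[OF SI fin] by (simp add: add.commute)
    also have "(\<Sum>k\<in>S. exp (c*a k) * v k) = e*u" unfolding u_def e_def using aS
      by (simp add: sum_distrib_left)
    finally show ?thesis .
  qed
  have L: "(\<Sum>j\<in>I. (exp (c*a j) / (\<Sum>k\<in>I. exp (c*a k))) * v j) = (e*u+q)/(ns*e+r)"
    unfolding N[symmetric] Z by (simp add: sum_divide_distrib)
  have pos: "ns*e + r > 0" using s0 e0 r0 by (smt (verit) mult_pos_pos)
  have D: "(e*u+q)/(ns*e+r) - (1/ns)*u = (ns*q - r*u)/(ns*(ns*e+r))"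
    using s0 pos by (simp add: field_simps)
  have qb: "\<bar>q\<bar> \<le> r*K"
  proof -
    have "\<bar>q\<bar> \<le> (\<Sum>k\<in>R. \<bar>exp (c*a k) * v k\<bar>)" unfolding q_def by (rule sum_abs)
    also have "\<dots> \<le> (\<Sum>k\<in>R. exp (c*a k) * K)"
      by (rule sum_mono) (use vK R_def in \<open>auto simp: abs_mult intro: mult_left_mono\<close>)
    also have "\<dots> = r*K" unfolding r_def by (simp add: sum_distrib_right)
    finally show ?thesis .
  qed
  have ub: "\<bar>u\<bar> \<le> ns*K"
  proof -
    have "\<bar>u\<bar> \<le> (\<Sum>k\<in>S. \<bar>v k\<bar>)" unfolding u_def by (rule sum_abs)
    also have "\<dots> \<le> (\<Sum>k\<in>S. K)" by (rule sum_mono) (use vK SI in auto)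
    also have "\<dots> = ns*K" unfolding ns_def by simp
    finally show ?thesis .
  qed
  have num: "\<bar>(ns*q) - (r*u)\<bar> \<le> 2*ns*r*K"
  proof -
    have "\<bar>(ns*q) - (r*u)\<bar> \<le> ns*\<bar>q\<bar> + r*\<bar>u\<bar>" using s0 r0 by (simp add: abs_mult abs_triangle_ineq4 order_trans[OF abs_triangle_ineq4])
    also have "\<dots> \<le> ns*(r*K) + r*(ns*K)" using qb ub s0 r0 by (intro add_mono mult_left_mono) auto
    finally show ?thesis by (simp add: algebra_simps)
  qed
  have "\<bar>(ns*q - r*u)/(ns*(ns*e+r))\<bar> \<le> 2*ns*r*K/(ns*(ns*e+r))"
  proof -
    have d: "ns*(ns*e+r) > 0" using s0 pos by simp
    have "\<bar>(ns*q - r*u)/(ns*(ns*e+r))\<bar> = \<bar>ns*q - r*u\<bar>/(ns*(ns*e+r))"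
      using d by (simp add: abs_divide)
    also have "\<dots> \<le> 2*ns*r*K/(ns*(ns*e+r))" using d num by (intro divide_right_mono) auto
    finally show ?thesis .
  qed
  also have "\<dots> = 2*r*K/(ns*e+r)" using s0 by (simp add: divide_simps)
  also have "\<dots> \<le> 2*r*K/e"
  proof (rule divide_left_mono)
    have "card S \<ge> 1" using finS Sne by (simp add: Suc_le_eq card_gt_0_iff)
    hence "ns \<ge> 1" unfolding ns_def by simp
    hence "ns*e \<ge> e" using mult_right_mono[of 1 ns e] e0 by simp
    thus "e \<le> ns*e + r" using r0 by simp
    show "0 \<le> 2*r*K" using r0 K0 by simp
    show "0 < (ns*e+r)*e" using pos e0 by simp
  qed
  also have "\<dots> \<le> 2*K*real(card I)*exp(-(c*\<delta>))"
  proof -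
    have "r \<le> (\<Sum>k\<in>R. e*exp(-(c*\<delta>)))" unfolding r_def
    proof (rule sum_mono)
      fix k assume "k \<in> R"
      hence "c*a k \<le> c*(m-\<delta>)" using aR R_def c0 by (simp add: mult_left_mono)
      hence "exp (c*a k) \<le> exp (c*(m-\<delta>))" by simp
      also have "exp (c*(m-\<delta>)) = exp (c*m + (-(c*\<delta>)))" by (simp add: right_diff_distrib)
      also have "\<dots> = e*exp(-(c*\<delta>))" unfolding e_def by (rule exp_add)
      finally show "exp (c*a k) \<le> e*exp(-(c*\<delta>))" .
    qed
    also have "\<dots> = real (card R) * e * exp(-(c*\<delta>))" by simp
    also have "\<dots> \<le> real (card I) * e * exp(-(c*\<delta>))"
    proof (intro mult_right_mono)
      show "real (card R) \<le> real (card I)" using fin unfolding R_def by (simp add: card_mono)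
    qed (use e0 in simp_all)
    finally have rb: "r \<le> real (card I) * e * exp(-(c*\<delta>))" .
    hence "2*r*K \<le> 2*K*real(card I)*exp(-(c*\<delta>)) * e" using K0
    proof -
      have "2*K*r \<le> 2*K*(real (card I) * e * exp(-(c*\<delta>)))"
        using rb K0 by (intro mult_left_mono) auto
      thus ?thesis by (simp add: algebra_simps)
    qed
    thus ?thesis using e0 by (subst divide_le_eq) simp
  qed
  finally have X: "\<bar>(e*u+q)/(ns*e+r) - (1/ns)*u\<bar> \<le> 2*K*real(card I)*exp(-(c*\<delta>))"
    unfolding D .
  have Y: "(1/real(card S)) * (\<Sum>j\<in>S. v j) = (1/ns)*u" by (simp add: ns_def u_def)
  show ?thesis using X by (simp only: L Y)
qed


lemma vm_scale: "(x::real^'e) v* (c *\<^sub>R (W::real^'k^'e)) = c *\<^sub>R (x v* W)"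
  by (simp add: vec_eq_iff vector_matrix_mult_def sum_distrib_left algebra_simps)

lemma score_scale: "attn_score X (c *\<^sub>R WQ) WK i j = c * attn_score X WQ WK i j"
  unfolding attn_score_def vm_scale by simp

lemma comp_bound:
  fixes x :: "real^'e" and W :: "real^'h^'e"
  assumes "\<forall>e. \<bar>x $ e\<bar> \<le> M" "norm W \<le> B"
  shows "\<bar>(x v* W) $ h\<bar> \<le> real CARD('e) * M * B"
proof -
  have "\<bar>(x v* W) $ h\<bar> = \<bar>\<Sum>e\<in>UNIV. W $ e $ h * x $ e\<bar>"
    by (simp add: vector_matrix_mult_def mult.commute)
  also have "\<dots> \<le> (\<Sum>e\<in>UNIV. \<bar>W $ e $ h * x $ e\<bar>)" by (rule sum_abs)
  also have "\<dots> \<le> (\<Sum>e\<in>(UNIV::'e set). B * M)"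
  proof (rule sum_mono)
    fix e
    have n1: "norm (W $ e) \<le> norm W" by (rule Finite_Cartesian_Product.norm_nth_le)
    have "\<bar>W $ e $ h\<bar> \<le> B"
      using component_le_norm_cart[of "W $ e" h] n1 assms(2) by linarith
    moreover have "\<bar>x $ e\<bar> \<le> M" using assms(1) by simp
    ultimately show "\<bar>W $ e $ h * x $ e\<bar> \<le> B * M"
      unfolding abs_mult by (meson abs_ge_zero mult_mono order_trans)
  qed
  also have "\<dots> = real CARD('e) * M * B" by simp
  finally show ?thesis .
qed

lemma linf_le:
  fixes v :: "real^'h"
  assumes "\<forall>h. \<bar>v $ h\<bar> \<le> \<epsilon>"
  shows "linf_norm v \<le> \<epsilon>"
  unfolding linf_norm_def using assms by (subst Max_le_iff) auto

lemma diff_comp: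
  "(softmax_attn X WQ' WK' WV i - saturated_attn X WQ WK WV i) $ h =
    (\<Sum>j\<in>{1..i}. (exp (attn_score X WQ' WK' i j) / (\<Sum>k\<in>{1..i}. exp (attn_score X WQ' WK' i k))) * (X j v* WV) $ h)
    - (1/real (card (max_set X WQ WK i))) * (\<Sum>j\<in>max_set X WQ WK i. (X j v* WV) $ h)"
  unfolding softmax_attn_def saturated_attn_def by simp

theorem mainTheorem4:
  fixes B :: real
  shows "\<exists>(C::real) (p::nat). \<forall>(n::nat) (M::real) (\<delta>::real) (\<epsilon>::real)
      (X :: nat \<Rightarrow> real^'e) (WQ :: real^'k^'e) (WK :: real^'k^'e) (WV :: real^'h^'e).
    (\<forall>i\<in>{1..n}. \<forall>e. \<bar>X i $ e\<bar> \<le> M) \<longrightarrow>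
    norm WQ \<le> B \<longrightarrow> norm WK \<le> B \<longrightarrow> norm WV \<le> B \<longrightarrow>
    \<delta> > 0 \<longrightarrow> \<epsilon> > 0 \<longrightarrow>
    (\<forall>i\<in>{1..n}. \<forall>j\<in>max_set X WQ WK i. \<forall>k\<in>{1..i}. k \<notin> max_set X WQ WK i \<longrightarrow>
        attn_score X WQ WK i j - attn_score X WQ WK i k \<ge> \<delta>) \<longrightarrow>
    (\<exists>(WQ' :: real^'k^'e) (WK' :: real^'k^'e) (WV' :: real^'h^'e).
       (let P = C * (1 + M + 1 / \<delta> + ln (real n) + max 0 (ln (1 / \<epsilon>))) ^ p in
          norm WQ' \<le> P \<and> norm WK' \<le> P \<and> norm WV' \<le> P) \<and>
       (\<forall>i\<in>{1..n}. linf_norm (softmax_attn X WQ' WK' WV' i - saturated_attn X WQ WK WV i) \<le> \<epsilon>))"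
proof -
  define D where "D = real CARD('e)"
  have D0: "D \<ge> 0" unfolding D_def by simp
  define C where "C = (1 + \<bar>B\<bar>) * (3 + 2*D*\<bar>B\<bar>)"
  have C0: "C \<ge> 0" unfolding C_def using D0 by simp
  show ?thesis
  proof (intro exI[of _ C] exI[of _ "2::nat"] allI impI)
    fix n :: nat and M \<delta> \<epsilon> :: real and X :: "nat \<Rightarrow> real^'e"
      and WQ WK :: "real^'k^'e" and WV :: "real^'h^'e"
    assume XM: "\<forall>i\<in>{1..n}. \<forall>e. \<bar>X i $ e\<bar> \<le> M"
      and nQ: "norm WQ \<le> B" and nK: "norm WK \<le> B" and nV: "norm WV \<le> B"
      and d0: "\<delta> > 0" and e0: "\<epsilon> > 0"
      and gap: "\<forall>i\<in>{1..n}. \<forall>j\<in>max_set X WQ WK i. \<forall>k\<in>{1..i}. k \<notin> max_set X WQ WK i \<longrightarrow>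
        attn_score X WQ WK i j - attn_score X WQ WK i k \<ge> \<delta>"
    define L where "L = 1 + M + 1 / \<delta> + ln (real n) + max 0 (ln (1 / \<epsilon>))"
    show "\<exists>(WQ' :: real^'k^'e) (WK' :: real^'k^'e) (WV' :: real^'h^'e).
       (let P = C * (1 + M + 1 / \<delta> + ln (real n) + max 0 (ln (1 / \<epsilon>))) ^ 2 in
          norm WQ' \<le> P \<and> norm WK' \<le> P \<and> norm WV' \<le> P) \<and>
       (\<forall>i\<in>{1..n}. linf_norm (softmax_attn X WQ' WK' WV' i - saturated_attn X WQ WK WV i) \<le> \<epsilon>)"
    proof (cases "n = 0")
      case True
      have "C * L^2 \<ge> 0" using C0 by simp
      thus ?thesis using True unfolding L_def Let_def
        by (intro exI[of _ 0]) auto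
    next
      case False
      hence n1: "n \<ge> 1" by simp
      have M0: "M \<ge> 0" using XM n1 by (meson abs_ge_zero atLeastAtMost_iff order_trans le_refl)
      have B0: "B \<ge> 0" using nQ norm_ge_zero order_trans by blast
      define mx where "mx = max 0 (ln (1 / \<epsilon>))"
      have mx0: "mx \<ge> 0" unfolding mx_def by simp
      have ln0: "ln (real n) \<ge> 0" using n1 by simp
      have Ld: "L \<ge> 1/\<delta>" unfolding L_def using M0 mx0 ln0 mx_def by simp
      have L1: "L \<ge> 1" unfolding L_def using M0 mx0 ln0 mx_def d0 by simp
      have LM: "L \<ge> M" unfolding L_def using M0 mx0 ln0 mx_def d0 by simp
      have Lln: "L \<ge> ln (real n)" unfolding L_def using M0 mx0 ln0 mx_def d0 by simp
      have Lmx: "L \<ge> mx" unfolding L_def using M0 mx0 ln0 mx_def d0 by simp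
      define K where "K = D * M * B"
      have K0: "K \<ge> 0" unfolding K_def using D0 M0 B0 by simp
      define T where "T = ln (real n) + mx + (2*K + 1)"
      have T0: "T \<ge> 0" unfolding T_def using ln0 mx0 K0 by simp
      define c where "c = L * T"
      have c0: "c \<ge> 0" unfolding c_def using L1 T0 by simp
      have cd: "c * \<delta> \<ge> T"
      proof -
        have "L * \<delta> \<ge> 1" using Ld d0 by (simp add: divide_le_eq mult.commute)
        hence "T * (L * \<delta>) \<ge> T * 1" using T0 by (intro mult_left_mono) auto
        thus ?thesis unfolding c_def by (simp add: algebra_simps)
      qed
      have TL: "T \<le> (3 + 2*D*B) * L"
      proof -
        have "2*K \<le> 2*D*B*L" unfolding K_def using LM D0 B0
          by (simp add: mult_left_mono mult.commute mult.left_commute)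
        thus ?thesis unfolding T_def using Lln Lmx L1 by (simp add: algebra_simps)
      qed
      have cb: "c \<le> (3 + 2*D*B) * L^2"
      proof -
        have "c \<le> L * ((3 + 2*D*B) * L)" unfolding c_def using TL L1 by (intro mult_left_mono) auto
        thus ?thesis by (simp add: power2_eq_square algebra_simps)
      qed
      have CB: "C = (1 + B) * (3 + 2*D*B)" unfolding C_def using B0 by simp
      have L2: "L^2 \<ge> 1" using L1 by (simp add: one_le_power)
      have BCL: "B \<le> C * L^2"
      proof -
        have "B \<le> C" unfolding CB using B0 D0 by (simp add: algebra_simps mult_nonneg_nonneg)
        also have "C \<le> C * L^2" using C0 L2 by (simp add: mult_le_cancel_left1)
        finally show ?thesis .
      qed
      have nWQ: "norm (c *\<^sub>R WQ) \<le> C * L^2"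
      proof -
        have "norm (c *\<^sub>R WQ) = c * norm WQ" using c0 by simp
        also have "\<dots> \<le> ((3 + 2*D*B) * L^2) * B" using cb nQ c0 B0
          by (meson mult_mono norm_ge_zero order_trans)
        also have "\<dots> \<le> C * L^2" unfolding CB using B0 D0 L2
          by (simp add: algebra_simps mult_nonneg_nonneg)
        finally show ?thesis .
      qed
      have err: "2*K*real n*exp(-(c*\<delta>)) \<le> \<epsilon>"
      proof -
        have "exp(-(c*\<delta>)) \<le> exp (-T)" using cd by simp
        hence "2*K*real n*exp(-(c*\<delta>)) \<le> 2*K*real n*exp(-T)" using K0 by (simp add: mult_left_mono)
        also have "exp (-T) = (1/real n) * exp (-mx) * exp (-(2*K+1))"
          unfolding T_def using n1 by (simp add: exp_add exp_minus exp_diff field_simps)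
        also have "2*K*real n*((1/real n) * exp (-mx) * exp (-(2*K+1))) = (2*K*exp (-(2*K+1))) * exp (-mx)"
          using n1 by (simp add: field_simps)
        also have "\<dots> \<le> 1 * \<epsilon>"
        proof (rule mult_mono)
          have "2*K + 1 \<le> exp (2*K+1)" using exp_ge_add_one_self[of "2*K+1"] by simp
          hence "2*K \<le> exp (2*K+1)" by simp
          moreover have "exp (-(2*K+1)) = 1 / exp (2*K+1)" by (simp only: exp_minus inverse_eq_divide)
          ultimately show "2*K*exp (-(2*K+1)) \<le> 1" by (simp add: divide_le_eq)
          have "exp (-mx) \<le> exp (-(ln (1/\<epsilon>)))" unfolding mx_def by simp
          also have "\<dots> = \<epsilon>" using e0 by (simp add: ln_div)
          finally show "exp (-mx) \<le> \<epsilon>" .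
        qed (use e0 in auto)
        finally show ?thesis by simp
      qed
      have A: "let P = C * (1 + M + 1 / \<delta> + ln (real n) + max 0 (ln (1 / \<epsilon>))) ^ 2 in
          norm (c *\<^sub>R WQ) \<le> P \<and> norm WK \<le> P \<and> norm WV \<le> P"
          unfolding Let_def L_def[symmetric] using nWQ BCL nK nV by auto
      have Bp: "\<forall>i\<in>{1..n}. linf_norm (softmax_attn X (c *\<^sub>R WQ) WK WV i - saturated_attn X WQ WK WV i) \<le> \<epsilon>"
      proof
        fix i assume i: "i \<in> {1..n}"
        let ?a = "attn_score X WQ WK i"
        let ?S = "max_set X WQ WK i"
        define m where "m = Max (?a ` {1..i})"
        have fin: "finite {1..i}" by simp
        have ne: "{1..i} \<noteq> {}" using i by simp
        have SI: "?S \<subseteq> {1..i}" unfolding max_set_def by auto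
        have "m \<in> ?a ` {1..i}" unfolding m_def using fin ne by (intro Max_in) auto
        then obtain j0 where j0: "j0 \<in> {1..i}" "?a j0 = m" by auto
        have j0S: "j0 \<in> ?S" unfolding max_set_def using j0 m_def by simp
        have Sne: "?S \<noteq> {}" using j0S by blast
        have aS: "\<forall>j\<in>?S. ?a j = m" unfolding max_set_def m_def by simp
        have aR: "\<forall>k\<in>{1..i}-?S. ?a k \<le> m - \<delta>"
        proof
          fix k assume k: "k \<in> {1..i}-?S"
          have "?a j0 - ?a k \<ge> \<delta>" using gap i j0S k by blast
          thus "?a k \<le> m - \<delta>" using j0 by simp
        qed
        have iX: "\<forall>j\<in>{1..i}. \<forall>e. \<bar>X j $ e\<bar> \<le> M" using XM i by auto
        show "linf_norm (softmax_attn X (c *\<^sub>R WQ) WK WV i - saturated_attn X WQ WK WV i) \<le> \<epsilon>"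
        proof (rule linf_le, rule allI)
          fix h
          have vK: "\<forall>j\<in>{1..i}. \<bar>(X j v* WV) $ h\<bar> \<le> K"
            using iX comp_bound[OF _ nV] unfolding K_def D_def by blast
          have "\<bar>(softmax_attn X (c *\<^sub>R WQ) WK WV i - saturated_attn X WQ WK WV i) $ h\<bar>
             \<le> 2*K*real(card {1..i})*exp(-(c*\<delta>))"
            unfolding diff_comp score_scale
            by (rule sm_bound[OF fin SI Sne aS aR vK c0])
          also have "\<dots> \<le> 2*K*real n*exp(-(c*\<delta>))"
            using i K0 by (intro mult_right_mono mult_left_mono) auto
          also have "\<dots> \<le> \<epsilon>" by (rule err)
          finally show "\<bar>(softmax_attn X (c *\<^sub>R WQ) WK WV i - saturated_attn X WQ WK WV i) $ h\<bar> \<le> \<epsilon>" .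
        qed
      qed
      show ?thesis using A Bp by blast
    qed
  qed
qed

end
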